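(* Let $r\ge 2$, $t\ge 2$, and let $G$ be an $(r,t,a_0)$-staircase graph of girth at least $t+1$. Then $a_0\ge r+1$.
   Context: Staircase graph: Let $r\ge 2$ and $t\ge 2$ be integers, $s=\lfloor (t-1)/2\rfloor$, and $a_0$ a positive integer; if $t$ is odd assume $t\ge 3$. An $(r,t,a_0)$-staircase graph is a finite simple graph $G$ whose vertex set is a disjoint union $\{v_\infty\}\cup V_0\cup V_1\cup\cdots\cup V_s$ such that: $|V_0|=a_0$ and $v_\infty$ is adjacent to every vertex of $V_0$ and to no other vertex; for each $i$ with $0\le i\le s-1$ (if $t$ is even) or $0\le i\le s-2$ (if $t$ is odd), every vertex of $V_i$ has exactly $r$ neighbours in $V_{i+1}$ and every vertex of $V_{i+1}$ has exactly one neighbour in $V_i$; if $t$ is even, every vertex of $V_s$ has exactly $r$ neighbours in $V_s$; if $t$ is odd, every vertex of $V_{s-1}$ has exactly $r$ neighbours in $V_s$ and every vertex of $V_s$ has exactly $r+1$ neighbours in $V_{s-1}$; and there are no other edges. Girth: length of a shortest cycle ($\infty$ if there is none). *)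

theory Defs
  imports Main "HOL-Library.Extended_Nat"
begin

definition simple_graph :: "'a set \<Rightarrow> ('a \<Rightarrow> 'a \<Rightarrow> bool) \<Rightarrow> bool" where
  "simple_graph V E \<longleftrightarrow> finite V \<and> (\<forall>x y. E x y \<longrightarrow> E y x) \<and> (\<forall>x. \<not> E x x)
     \<and> (\<forall>x y. E x y \<longrightarrow> x \<in> V \<and> y \<in> V)"

definition stair_step :: "nat \<Rightarrow> nat \<Rightarrow> bool" where
  "stair_step t i \<longleftrightarrow> (if even t then i < (t - 1) div 2 else i + 1 < (t - 1) div 2)"

definition staircase :: "'a set \<Rightarrow> ('a \<Rightarrow> 'a \<Rightarrow> bool) \<Rightarrow> nat \<Rightarrow> nat \<Rightarrow> nat \<Rightarrow> bool" where
  "staircase V E r t a0 \<longleftrightarrow> simple_graph V E \<and> 2 \<le> r \<and> 2 \<le> t \<and> 0 < a0 \<and>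
    (\<exists>vinf L. let s = (t - 1) div 2 in
       V = insert vinf (\<Union>i\<le>s. L i) \<and> vinf \<notin> (\<Union>i\<le>s. L i) \<and>
       (\<forall>i\<le>s. \<forall>j\<le>s. i \<noteq> j \<longrightarrow> L i \<inter> L j = {}) \<and>
       card (L 0) = a0 \<and>
       (\<forall>y. E vinf y \<longleftrightarrow> y \<in> L 0) \<and>
       (\<forall>i. stair_step t i \<longrightarrow>
          (\<forall>x\<in>L i. card {y \<in> L (Suc i). E x y} = r) \<and>
          (\<forall>y\<in>L (Suc i). card {x \<in> L i. E y x} = 1)) \<and>
       (even t \<longrightarrow> (\<forall>x\<in>L s. card {y \<in> L s. E x y} = r)) \<and>
       (odd t \<longrightarrow> (\<forall>x\<in>L (s - 1). card {y \<in> L s. E x y} = r) \<and>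
                   (\<forall>y\<in>L s. card {x \<in> L (s - 1). E y x} = r + 1)) \<and>
       (\<forall>x y. E x y \<longrightarrow>
          (x = vinf \<and> y \<in> L 0) \<or> (y = vinf \<and> x \<in> L 0) \<or>
          (\<exists>i. stair_step t i \<and> ((x \<in> L i \<and> y \<in> L (Suc i)) \<or> (y \<in> L i \<and> x \<in> L (Suc i)))) \<or>
          (even t \<and> x \<in> L s \<and> y \<in> L s) \<or>
          (odd t \<and> ((x \<in> L (s - 1) \<and> y \<in> L s) \<or> (y \<in> L (s - 1) \<and> x \<in> L s)))))"

definition is_cycle :: "'a set \<Rightarrow> ('a \<Rightarrow> 'a \<Rightarrow> bool) \<Rightarrow> 'a list \<Rightarrow> bool" where
  "is_cycle V E xs \<longleftrightarrow> 3 \<le> length xs \<and> distinct xs \<and> set xs \<subseteq> V \<and>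
     (\<forall>i < length xs. E (xs ! i) (xs ! ((i + 1) mod length xs)))"

definition girth :: "'a set \<Rightarrow> ('a \<Rightarrow> 'a \<Rightarrow> bool) \<Rightarrow> enat" where
  "girth V E = (INF xs \<in> {xs. is_cycle V E xs}. enat (length xs))"

end

theory Submission
  imports Defs
begin

definition par :: "(nat \<Rightarrow> 'a set) \<Rightarrow> ('a \<Rightarrow> 'a \<Rightarrow> bool) \<Rightarrow> nat \<Rightarrow> 'a \<Rightarrow> 'a" where
  "par L E i y = (THE x. x \<in> L i \<and> E y x)"

fun anc :: "(nat \<Rightarrow> 'a set) \<Rightarrow> ('a \<Rightarrow> 'a \<Rightarrow> bool) \<Rightarrow> nat \<Rightarrow> 'a \<Rightarrow> 'a" where
  "anc L E 0 y = y"
| "anc L E (Suc i) y = anc L E i (par L E i y)"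

fun walk :: "('a \<Rightarrow> 'a \<Rightarrow> bool) \<Rightarrow> 'a list \<Rightarrow> bool" where
  "walk E [] = True"
| "walk E [x] = True"
| "walk E (x # y # xs) = (E x y \<and> walk E (y # xs))"

lemma walk_Cons: "xs \<noteq> [] \<Longrightarrow> walk E (x # xs) = (E x (hd xs) \<and> walk E xs)"
  by (cases xs) auto

lemma walk_snoc: "xs \<noteq> [] \<Longrightarrow> walk E (xs @ [y]) = (walk E xs \<and> E (last xs) y)"
  by (induction E xs rule: walk.induct) auto

lemma walk_nth: "walk E xs \<Longrightarrow> i + 1 < length xs \<Longrightarrow> E (xs ! i) (xs ! (i + 1))"
proof (induction E xs arbitrary: i rule: walk.induct)
  case (3 E x y xs) then show ?case by (cases i) auto
qed auto

lemma cycle_of_walk: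
  assumes "walk E P" "distinct P" "3 \<le> length P" "set P \<subseteq> V" "E (last P) (hd P)"
  shows "is_cycle V E P"
  unfolding is_cycle_def
proof (intro conjI allI impI)
  fix i assume i: "i < length P"
  show "E (P ! i) (P ! ((i + 1) mod length P))"
  proof (cases "i + 1 < length P")
    case True then show ?thesis using walk_nth[OF assms(1)] by simp
  next
    case False
    hence ii: "i = length P - 1" using i by simp
    have ne: "P \<noteq> []" using assms(3) by auto
    have "(i + 1) mod length P = 0" using ii ne by simp
    then show ?thesis using assms(5) ii ne by (simp add: last_conv_nth hd_conv_nth)
  qed
qed (use assms in auto)

lemma girth_le: "is_cycle V E C \<Longrightarrow> girth V E \<le> enat (length C)"
  unfolding girth_def by (rule INF_lower) simp

lemma layers_nonempty:
  assumes "L 0 \<noteq> {}" "\<And>i x. i < m \<Longrightarrow> x \<in> L i \<Longrightarrow> card {y\<in>L (Suc i). E x y} = r" "0 < r"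
  shows "j \<le> m \<Longrightarrow> L j \<noteq> {}"
proof (induction j)
  case 0 then show ?case using assms(1) by simp
next
  case (Suc j)
  then obtain x where x: "x \<in> L j" by auto
  have "card {y\<in>L (Suc j). E x y} = r" using assms(2)[of j x] Suc.prems x by simp
  then have "{y\<in>L (Suc j). E x y} \<noteq> {}" using assms(3) by (metis card.empty less_irrefl)
  then show ?case by auto
qed

context
  fixes L :: "nat \<Rightarrow> 'a set" and E :: "'a \<Rightarrow> 'a \<Rightarrow> bool" and m :: nat
  assumes one: "\<And>i y. i < m \<Longrightarrow> y \<in> L (Suc i) \<Longrightarrow> card {x\<in>L i. E y x} = 1"
    and disj: "\<And>i j. i \<le> m \<Longrightarrow> j \<le> m \<Longrightarrow> i \<noteq> j \<Longrightarrow> L i \<inter> L j = {}"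
    and sym: "\<And>x y. E x y \<Longrightarrow> E y x"
begin

lemma par_prop:
  assumes "i < m" "y \<in> L (Suc i)"
  shows "par L E i y \<in> L i \<and> E y (par L E i y)"
proof -
  obtain a where a: "{x\<in>L i. E y x} = {a}" using one[OF assms] card_1_singletonE by blast
  have "(THE x. x \<in> L i \<and> E y x) = a"
    by (rule the_equality) (use a in auto)
  then show ?thesis using a unfolding par_def by auto
qed

lemma anc_in: "j \<le> m \<Longrightarrow> y \<in> L j \<Longrightarrow> anc L E j y \<in> L 0"
proof (induction j arbitrary: y)
  case (Suc j)
  have "par L E j y \<in> L j" using par_prop[of j y] Suc.prems by auto
  then show ?case using Suc by simp
qed simp

lemma path_lemma:
  "j \<le> m \<Longrightarrow> x1 \<in> L j \<Longrightarrow> x2 \<in> L j \<Longrightarrow> x1 \<noteq> x2 \<Longrightarrow> anc L E j x1 = anc L E j x2 \<Longrightarrow>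
   \<exists>P. P \<noteq> [] \<and> hd P = x1 \<and> last P = x2 \<and> distinct P \<and> walk E P \<and>
       set P \<subseteq> {x1, x2} \<union> (\<Union>i<j. L i) \<and> 3 \<le> length P \<and> length P \<le> 2 * j + 1"
proof (induction j arbitrary: x1 x2)
  case 0 then show ?case by simp
next
  case (Suc j)
  define p1 where "p1 = par L E j x1"
  define p2 where "p2 = par L E j x2"
  have jm: "j < m" using Suc.prems by simp
  have p1: "p1 \<in> L j" "E x1 p1" using par_prop[OF jm Suc.prems(2)] p1_def by auto
  have p2: "p2 \<in> L j" "E x2 p2" using par_prop[OF jm Suc.prems(3)] p2_def by auto
  have nl: "x \<notin> (\<Union>i<Suc j. L i)" if "x \<in> L (Suc j)" for x
  proof
    assume "x \<in> (\<Union>i<Suc j. L i)"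
    then obtain i where "i < Suc j" "x \<in> L i" by auto
    then show False using disj[of i "Suc j"] Suc.prems(1) that by auto
  qed
  show ?case
  proof (cases "p1 = p2")
    case True
    show ?thesis
      apply (rule exI[of _ "[x1, p1, x2]"])
      using True p1 p2 nl[OF Suc.prems(2)] nl[OF Suc.prems(3)] Suc.prems(4) sym by auto
  next
    case False
    have "anc L E j p1 = anc L E j p2" using Suc.prems(5) p1_def p2_def by simp
    then obtain Q where Q: "Q \<noteq> []" "hd Q = p1" "last Q = p2" "distinct Q" "walk E Q"
      "set Q \<subseteq> {p1, p2} \<union> (\<Union>i<j. L i)" "length Q \<le> 2 * j + 1"
      using Suc.IH[of p1 p2] Suc.prems(1) p1 p2 False by auto
    have sQ: "set Q \<subseteq> (\<Union>i<Suc j. L i)"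
    proof
      fix x assume "x \<in> set Q"
      then have "x \<in> L j \<or> (\<exists>i<j. x \<in> L i)" using Q(6) p1 p2 by auto
      then show "x \<in> (\<Union>i<Suc j. L i)" by (metis UN_I lessThan_iff less_Suc_eq)
    qed
    have w: "walk E (x1 # Q @ [x2])"
      using Q p1 p2 sym walk_snoc[of Q E x2] walk_Cons[of "Q @ [x2]" E x1] by auto
    have lQ: "1 \<le> length Q" using Q(1) by (cases Q) auto
    show ?thesis
      apply (rule exI[of _ "x1 # Q @ [x2]"])
      using Q sQ nl[OF Suc.prems(2)] nl[OF Suc.prems(3)] Suc.prems(4) w lQ by auto
  qed
qed

end

theorem mainTheorem6:
  fixes V :: "'a set" and E :: "'a \<Rightarrow> 'a \<Rightarrow> bool" and r t a0 :: nat
  assumes "2 \<le> r" and "2 \<le> t"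
    and "staircase V E r t a0"
    and "enat (t + 1) \<le> girth V E"
  shows "r + 1 \<le> a0"
proof -
  from assms(3) have sg: "simple_graph V E" and a0: "0 < a0" unfolding staircase_def by auto
  from sg have sym: "\<And>x y. E x y \<Longrightarrow> E y x" and irr: "\<And>x. \<not> E x x"
    unfolding simple_graph_def by auto
  define s where "s = (t - 1) div 2"
  from assms(3) obtain vinf L where H: "let s = (t - 1) div 2 in
       V = insert vinf (\<Union>i\<le>s. L i) \<and> vinf \<notin> (\<Union>i\<le>s. L i) \<and>
       (\<forall>i\<le>s. \<forall>j\<le>s. i \<noteq> j \<longrightarrow> L i \<inter> L j = {}) \<and>
       card (L 0) = a0 \<and>
       (\<forall>y. E vinf y \<longleftrightarrow> y \<in> L 0) \<and>
       (\<forall>i. stair_step t i \<longrightarrow>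
          (\<forall>x\<in>L i. card {y \<in> L (Suc i). E x y} = r) \<and>
          (\<forall>y\<in>L (Suc i). card {x \<in> L i. E y x} = 1)) \<and>
       (even t \<longrightarrow> (\<forall>x\<in>L s. card {y \<in> L s. E x y} = r)) \<and>
       (odd t \<longrightarrow> (\<forall>x\<in>L (s - 1). card {y \<in> L s. E x y} = r) \<and>
                   (\<forall>y\<in>L s. card {x \<in> L (s - 1). E y x} = r + 1)) \<and>
       (\<forall>x y. E x y \<longrightarrow>
          (x = vinf \<and> y \<in> L 0) \<or> (y = vinf \<and> x \<in> L 0) \<or>
          (\<exists>i. stair_step t i \<and> ((x \<in> L i \<and> y \<in> L (Suc i)) \<or> (y \<in> L i \<and> x \<in> L (Suc i)))) \<or>
          (even t \<and> x \<in> L s \<and> y \<in> L s) \<or>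
          (odd t \<and> ((x \<in> L (s - 1) \<and> y \<in> L s) \<or> (y \<in> L (s - 1) \<and> x \<in> L s))))"
    unfolding staircase_def by blast
  have H': "V = insert vinf (\<Union>i\<le>s. L i) \<and> vinf \<notin> (\<Union>i\<le>s. L i) \<and>
       (\<forall>i\<le>s. \<forall>j\<le>s. i \<noteq> j \<longrightarrow> L i \<inter> L j = {}) \<and>
       card (L 0) = a0 \<and>
       (\<forall>y. E vinf y \<longleftrightarrow> y \<in> L 0) \<and>
       (\<forall>i. stair_step t i \<longrightarrow>
          (\<forall>x\<in>L i. card {y \<in> L (Suc i). E x y} = r) \<and>
          (\<forall>y\<in>L (Suc i). card {x \<in> L i. E y x} = 1)) \<and>
       (even t \<longrightarrow> (\<forall>x\<in>L s. card {y \<in> L s. E x y} = r)) \<and>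
       (odd t \<longrightarrow> (\<forall>x\<in>L (s - 1). card {y \<in> L s. E x y} = r) \<and>
                   (\<forall>y\<in>L s. card {x \<in> L (s - 1). E y x} = r + 1))"
    using H unfolding Let_def s_def by (elim conjE) (intro conjI; assumption)
  have V: "V = insert vinf (\<Union>i\<le>s. L i)" using H' by blast
  have disj: "\<forall>i\<le>s. \<forall>j\<le>s. i \<noteq> j \<longrightarrow> L i \<inter> L j = {}" using H' by blast
  have c0: "card (L 0) = a0" using H' by blast
  have step: "\<forall>i. stair_step t i \<longrightarrow> (\<forall>x\<in>L i. card {y\<in>L (Suc i). E x y} = r) \<and>
                   (\<forall>y\<in>L (Suc i). card {x\<in>L i. E y x} = 1)" using H' by blast
  have ev: "even t \<longrightarrow> (\<forall>x\<in>L s. card {y\<in>L s. E x y} = r)" using H' by blast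
  have od: "odd t \<longrightarrow> (\<forall>x\<in>L (s - 1). card {y\<in>L s. E x y} = r) \<and>
                 (\<forall>y\<in>L s. card {x\<in>L (s - 1). E y x} = r + 1)" using H' by blast
  have "0 < card (L 0)" using c0 a0 by simp
  then have fin0: "finite (L 0)" "L 0 \<noteq> {}" by (simp_all add: card_gt_0_iff)
  have gc: False if "is_cycle V E C" "length C \<le> t" for C
  proof -
    have "enat (t + 1) \<le> enat (length C)" using order_trans[OF assms(4) girth_le[OF that(1)]] .
    then show False using that(2) by simp
  qed
  have LV: "L i \<subseteq> V" if "i \<le> s" for i using V that by auto
  show ?thesis
  proof (cases "even t")
    case True
    define m where "m = s"
    have stepm: "stair_step t i" if "i < m" for i using True that unfolding stair_step_def m_def s_def by simp
    have one: "\<And>i y. i < m \<Longrightarrow> y \<in> L (Suc i) \<Longrightarrow> card {x\<in>L i. E y x} = 1" using step stepm by blast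
    have dj: "\<And>i j. i \<le> m \<Longrightarrow> j \<le> m \<Longrightarrow> i \<noteq> j \<Longrightarrow> L i \<inter> L j = {}" using disj m_def by blast
    have ne: "L m \<noteq> {}" using layers_nonempty[of L m E r m] fin0 step stepm assms(1) by auto
    obtain x where x: "x \<in> L m" using ne by blast
    have cx: "card {y\<in>L m. E x y} = r" using ev True x m_def by auto
    have finx: "finite {y\<in>L m. E x y}" 
    proof (rule ccontr)
      assume "infinite {y\<in>L m. E x y}"
      then have "card {y\<in>L m. E x y} = 0" by (rule card.infinite)
      then show False using cx assms(1) by simp
    qed
    define N where "N = insert x {y\<in>L m. E x y}"
    have cN: "card N = r + 1" unfolding N_def using finx cx irr by simp
    have NL: "N \<subseteq> L m" unfolding N_def using x by auto
    have tm: "2 * m + 2 = t" using True assms(2) unfolding m_def s_def by (elim evenE) simp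
    have inj: "inj_on (anc L E m) N"
    proof (rule inj_onI, rule ccontr)
      fix u v assume uv: "u \<in> N" "v \<in> N" "anc L E m u = anc L E m v" "u \<noteq> v"
      have uL: "u \<in> L m" "v \<in> L m" using uv NL by auto
      obtain P where P: "P \<noteq> []" "hd P = u" "last P = v" "distinct P" "walk E P"
        "set P \<subseteq> {u, v} \<union> (\<Union>i<m. L i)" "3 \<le> length P" "length P \<le> 2 * m + 1"
        using path_lemma[OF one dj sym order_refl uL uv(4) uv(3)] by blast
      have Lsub: "\<And>i. i \<le> m \<Longrightarrow> L i \<subseteq> V" using LV m_def by auto
      have PV: "set P \<subseteq> V"
      proof
        fix z assume "z \<in> set P"
        then have "z = u \<or> z = v \<or> (\<exists>i<m. z \<in> L i)" using P(6) by auto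
        then show "z \<in> V" using uL Lsub by (metis less_imp_le_nat order_refl subsetD)
      qed
      show False
      proof (cases "u = x \<or> v = x")
        case True
        then have "E (last P) (hd P)" using P uv N_def sym by auto
        then have "is_cycle V E P" using cycle_of_walk P PV by blast
        then show False by (rule gc) (use P(8) tm in simp)
      next
        case False
        then have e: "E x u" "E x v" using uv N_def by auto
        have xP: "x \<notin> set P"
        proof
          assume "x \<in> set P"
          then have "x \<in> (\<Union>i<m. L i)" using P(6) False by auto
          then obtain i where "i < m" "x \<in> L i" by auto
          then show False using dj[of i m] x by auto
        qed
        have w: "walk E (P @ [x])" using walk_snoc[OF P(1)] P e sym by auto
        have "is_cycle V E (P @ [x])"
          by (rule cycle_of_walk) (use w P PV xP e x LV m_def in auto)
        then show False by (rule gc) (use P(8) tm in simp)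
      qed
    qed
    have "anc L E m ` N \<subseteq> L 0"
    proof
      fix z assume "z \<in> anc L E m ` N"
      then obtain w where w: "w \<in> N" "z = anc L E m w" by blast
      have "anc L E m w \<in> L 0"
        by (rule anc_in[where L=L and E=E and m=m]) (use one dj sym w NL in auto)
      then show "z \<in> L 0" using w by simp
    qed
    then have "card N \<le> card (L 0)" using card_inj_on_le[OF inj] fin0 by blast
    then show ?thesis using cN c0 by simp
  next
    case False
    define m where "m = s - 1"
    have s1: "1 \<le> s" "Suc m = s" "2 * s + 1 = t" using False assms(2) unfolding m_def s_def
      by (elim oddE; simp)+
    have stepm: "stair_step t i" if "i < m" for i using False that s1 unfolding stair_step_def m_def by simp
    have one: "\<And>i y. i < m \<Longrightarrow> y \<in> L (Suc i) \<Longrightarrow> card {x\<in>L i. E y x} = 1" using step stepm by blast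
    have dj: "\<And>i j. i \<le> m \<Longrightarrow> j \<le> m \<Longrightarrow> i \<noteq> j \<Longrightarrow> L i \<inter> L j = {}" using disj m_def by auto
    have ne: "L m \<noteq> {}" using layers_nonempty[of L m E r m] fin0 step stepm assms(1) by auto
    obtain x where x: "x \<in> L m" using ne by blast
    have "card {y\<in>L s. E x y} = r" using od False x m_def by auto
    then have "{y\<in>L s. E x y} \<noteq> {}" using assms(1) by (metis card.empty not_numeral_le_zero)
    then obtain y where y: "y \<in> L s" by auto
    define N where "N = {x\<in>L m. E y x}"
    have cN: "card N = r + 1" unfolding N_def using od False y m_def by auto
    have NL: "N \<subseteq> L m" unfolding N_def by auto
    have inj: "inj_on (anc L E m) N"
    proof (rule inj_onI, rule ccontr)
      fix u v assume uv: "u \<in> N" "v \<in> N" "anc L E m u = anc L E m v" "u \<noteq> v"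
      have uL: "u \<in> L m" "v \<in> L m" using uv NL by auto
      obtain P where P: "P \<noteq> []" "hd P = u" "last P = v" "distinct P" "walk E P"
        "set P \<subseteq> {u, v} \<union> (\<Union>i<m. L i)" "3 \<le> length P" "length P \<le> 2 * m + 1"
        using path_lemma[OF one dj sym order_refl uL uv(4) uv(3)] by blast
      have Lsub: "\<And>i. i \<le> m \<Longrightarrow> L i \<subseteq> V" using LV m_def by auto
      have PV: "set P \<subseteq> V"
      proof
        fix z assume "z \<in> set P"
        then have "z = u \<or> z = v \<or> (\<exists>i<m. z \<in> L i)" using P(6) by auto
        then show "z \<in> V" using uL Lsub by (metis less_imp_le_nat order_refl subsetD)
      qed
      have e: "E y u" "E y v" using uv N_def by auto
      have yP: "y \<notin> set P"
      proof
        assume "y \<in> set P"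
        then have "y = u \<or> y = v \<or> (\<exists>i<m. y \<in> L i)" using P(6) by auto
        then obtain i where "i \<le> m" "y \<in> L i" using uL by (metis less_imp_le_nat order_refl)
        moreover have "i \<le> s" "i \<noteq> s" using calculation(1) s1 by auto
        ultimately have "L i \<inter> L s = {}" using disj by blast
        then show False using y \<open>y \<in> L i\<close> by blast
      qed
      have w: "walk E (P @ [y])" using walk_snoc[OF P(1)] P e sym by auto
      have "is_cycle V E (P @ [y])"
        by (rule cycle_of_walk) (use w P PV yP e y LV in auto)
      then show False by (rule gc) (use P(8) s1 in simp)
    qed
    have "anc L E m ` N \<subseteq> L 0"
    proof
      fix z assume "z \<in> anc L E m ` N"
      then obtain w where w: "w \<in> N" "z = anc L E m w" by blast
      have "anc L E m w \<in> L 0"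
        by (rule anc_in[where L=L and E=E and m=m]) (use one dj sym w NL in auto)
      then show "z \<in> L 0" using w by simp
    qed
    then have "card N \<le> card (L 0)" using card_inj_on_le[OF inj] fin0 by blast
    then show ?thesis using cN c0 by simp
  qed
qed

end
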